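(* Let $D$ be a division ring with center $F$ such that $D$ is algebraic over $F$. Then $D$ has no maximal subrings if and only if $D=F$ is a field without maximal subrings.
   Context: All rings are associative unital and subrings share the identity. A maximal subring of a ring $T$ is a proper subring maximal under inclusion among proper subrings of $T$. *)

theory Defs
  imports Main
begin

definition subring :: "'a::ring_1 set \<Rightarrow> bool" where
  "subring S \<longleftrightarrow> 1 \<in> S \<and> (\<forall>x\<in>S. \<forall>y\<in>S. x + y \<in> S \<and> x - y \<in> S \<and> x * y \<in> S)"

definition maximal_subring :: "'a::ring_1 set \<Rightarrow> bool" where
  "maximal_subring S \<longleftrightarrow> subring S \<and> S \<noteq> UNIV \<and>
     (\<forall>T. subring T \<and> S \<subseteq> T \<and> T \<noteq> UNIV \<longrightarrow> T = S)"

definition center :: "'a::ring_1 set" where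
  "center = {z. \<forall>y. z * y = y * z}"

text \<open>x is algebraic over the center: it is a root of a nonzero polynomial with
  central coefficients (evaluation is well defined since coefficients are central).\<close>
definition algebraic_over_center :: "'a::ring_1 \<Rightarrow> bool" where
  "algebraic_over_center x \<longleftrightarrow>
     (\<exists>n c. (\<forall>i\<le>n. c i \<in> center) \<and> c n \<noteq> 0 \<and> (\<Sum>i\<le>n. c i * x ^ i) = 0)"

end

theory Submission
  imports Defs
begin


inductive_set lspan :: "'a::ring_1 set \<Rightarrow> 'a set \<Rightarrow> 'a set" for C W where
  lz: "0 \<in> lspan C W"
| ls: "c \<in> C \<Longrightarrow> w \<in> W \<Longrightarrow> y \<in> lspan C W \<Longrightarrow> c*w + y \<in> lspan C W"

lemma lspan_add: "y1 \<in> lspan C W \<Longrightarrow> y2 \<in> lspan C W \<Longrightarrow> y1 + y2 \<in> lspan C W"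
  by (induction y1 rule: lspan.induct) (auto simp: add.assoc intro: lspan.intros)

lemma lspan_mono: "y \<in> lspan C W \<Longrightarrow> W \<subseteq> W' \<Longrightarrow> y \<in> lspan C W'"
  by (induction y rule: lspan.induct) (auto intro: lspan.intros)

lemma lspan_rmult: "y \<in> lspan C W \<Longrightarrow> y * u \<in> lspan C ((\<lambda>w. w*u) ` W)"
proof (induction y rule: lspan.induct)
  case lz then show ?case by (simp add: lspan.lz)
next
  case (ls c w y)
  have "(c*w+y)*u = c*(w*u) + y*u" by (simp add: algebra_simps)
  then show ?case using ls by (auto intro: lspan.ls)
qed

lemma lspan_lmult: "y \<in> lspan C W \<Longrightarrow> a \<in> C \<Longrightarrow> (\<forall>p\<in>C. \<forall>q\<in>C. p*q \<in> C) \<Longrightarrow> a * y \<in> lspan C W"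
proof (induction y rule: lspan.induct)
  case lz then show ?case by (simp add: lspan.lz)
next
  case (ls c w y)
  have "a*(c*w+y) = (a*c)*w + a*y" by (simp add: algebra_simps)
  then show ?case using ls by (auto intro: lspan.ls)
qed

lemma lspan_sub: "y1 \<in> lspan C W \<Longrightarrow> y2 \<in> lspan C W \<Longrightarrow> -1 \<in> C \<Longrightarrow> (\<forall>p\<in>C. \<forall>q\<in>C. p*q \<in> C) \<Longrightarrow> y1 - y2 \<in> lspan C W"
  using lspan_add[of y1 C W "(-1)*y2"] lspan_lmult[of y2 C W "-1"] by simp

lemma lspan_sub_subring: "y \<in> lspan C W \<Longrightarrow> subring T \<Longrightarrow> C \<subseteq> T \<Longrightarrow> W \<subseteq> T \<Longrightarrow> y \<in> T"
proof (induction y rule: lspan.induct)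
  case lz
  then have "1 - 1 \<in> T" unfolding subring_def by blast
  then show ?case by simp
next
  case (ls c w y)
  then show ?case unfolding subring_def by blast
qed

lemma zorn_part:
  fixes C W :: "'a::ring_1 set"
  assumes "subring C" "C \<noteq> UNIV" "finite W" "\<forall>y. y \<in> lspan C W"
  shows "\<exists>S::'a set. maximal_subring S"
proof -
  let ?A = "{T. subring T \<and> C \<subseteq> T \<and> T \<noteq> UNIV}"
  have ne: "?A \<noteq> {}" using assms by auto
  have ch: "\<Union>\<C> \<in> ?A" if cne: "\<C> \<noteq> {}" and cch: "subset.chain ?A \<C>" for \<C>
  proof -
    have sub: "\<C> \<subseteq> ?A" and lin: "\<forall>X\<in>\<C>. \<forall>Y\<in>\<C>. X \<subseteq> Y \<or> Y \<subseteq> X"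
      using that(2) unfolding subset.chain_def by auto
    have one: "1 \<in> \<Union>\<C>" using that(1) sub unfolding subring_def by blast
    have "\<forall>a\<in>\<Union>\<C>. \<forall>b\<in>\<Union>\<C>. a + b \<in> \<Union>\<C> \<and> a - b \<in> \<Union>\<C> \<and> a * b \<in> \<Union>\<C>"
    proof (intro ballI)
      fix a b assume "a \<in> \<Union>\<C>" "b \<in> \<Union>\<C>"
      then obtain X Y where XY: "X \<in> \<C>" "Y \<in> \<C>" "a \<in> X" "b \<in> Y" by blast
      then have "\<exists>Z\<in>\<C>. a \<in> Z \<and> b \<in> Z" using lin by blast
      then obtain Z where "Z \<in> \<C>" "a \<in> Z" "b \<in> Z" by blast
      moreover have "subring Z" using sub \<open>Z \<in> \<C>\<close> by blast
      ultimately show "a + b \<in> \<Union>\<C> \<and> a - b \<in> \<Union>\<C> \<and> a * b \<in> \<Union>\<C>"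
        unfolding subring_def by blast
    qed
    then have "subring (\<Union>\<C>)" using one unfolding subring_def by blast
    moreover have "C \<subseteq> \<Union>\<C>" using that(1) sub by blast
    moreover have "\<Union>\<C> \<noteq> UNIV"
    proof
      assume "\<Union>\<C> = UNIV"
      then have "W \<subseteq> \<Union>\<C>" by simp
      then obtain B where B: "B \<in> \<C>" "W \<subseteq> B"
        using finite_subset_Union_chain[OF assms(3) _ cne cch] by blast
      have "B \<in> ?A" using B sub by blast
      then have "\<forall>y. y \<in> B" using lspan_sub_subring assms(4) B by blast
      then show False using \<open>B \<in> ?A\<close> by blast
    qed
    ultimately show ?thesis by blast
  qed
  obtain M where M: "M \<in> ?A" "\<forall>X\<in>?A. M \<subseteq> X \<longrightarrow> X = M"
    using subset_Zorn_nonempty[OF ne ch] by blast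
  have "maximal_subring M" unfolding maximal_subring_def using M by blast
  then show ?thesis by blast
qed



lemma sum_if_less: "(k::nat) \<le> n \<Longrightarrow> (\<Sum>i<n. if i < k then f i else 0) = (\<Sum>i<k. f i)"
proof (induction n)
  case 0 then show ?case by simp
next
  case (Suc n)
  show ?case
  proof (cases "k \<le> n")
    case True then show ?thesis using Suc by simp
  next
    case False then have "k = Suc n" using Suc by simp
    then show ?thesis by simp
  qed
qed

definition Cx :: "'a::ring_1 \<Rightarrow> 'a set" where "Cx x = {k. k * x = x * k}"

context
  fixes x :: "'a::division_ring" and n :: nat and c :: "nat \<Rightarrow> 'a"
  assumes cc: "\<forall>i\<le>n. c i \<in> center" and cn: "c n \<noteq> 0" and px: "(\<Sum>i\<le>n. c i * x ^ i) = 0"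
    and minimal: "\<forall>m<n. \<forall>c'. (\<forall>i\<le>m. c' i \<in> center) \<longrightarrow> c' m \<noteq> 0 \<longrightarrow> (\<Sum>i\<le>m. c' i * x ^ i) \<noteq> 0"
begin

lemma n_pos: "n > 0"
proof (rule ccontr)
  assume "\<not> n > 0" then have "n = 0" by simp
  then show False using px cn by simp
qed

lemma nolow:
  assumes "\<forall>i<n. u i \<in> center" "(\<Sum>i<n. u i * x ^ i) = 0"
  shows "\<forall>i<n. u i = 0"
proof (rule ccontr)
  assume "\<not> (\<forall>i<n. u i = 0)"
  define S where "S = {i. i < n \<and> u i \<noteq> 0}"
  have fS: "finite S" unfolding S_def by simp
  have neS: "S \<noteq> {}" using \<open>\<not> (\<forall>i<n. u i = 0)\<close> unfolding S_def by blast
  define m where "m = Max S"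
  have "m \<in> S" using Max_in[OF fS neS] m_def by simp
  then have mn: "m < n" and um: "u m \<noteq> 0" unfolding S_def by auto
  have big: "\<And>i. i \<in> S \<Longrightarrow> i \<le> m" using Max_ge[OF fS] m_def by simp
  have "(\<Sum>i\<le>m. u i * x ^ i) = (\<Sum>i<n. u i * x ^ i)"
  proof (rule sum.mono_neutral_left)
    show "finite {..<n}" by simp
    show "{..m} \<subseteq> {..<n}" using mn by auto
    show "\<forall>i\<in>{..<n} - {..m}. u i * x ^ i = 0"
    proof
      fix i assume "i \<in> {..<n} - {..m}"
      then have "i < n" "\<not> i \<le> m" by auto
      then have "i \<notin> S" using big by blast
      then show "u i * x ^ i = 0" using \<open>i < n\<close> unfolding S_def by simp
    qed
  qed
  then have "(\<Sum>i\<le>m. u i * x ^ i) = 0" using assms(2) by simp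
  moreover have "\<forall>i\<le>m. u i \<in> center" using assms(1) mn by simp
  ultimately show False using minimal mn um by blast
qed

lemma indep_aux:
  "\<forall>u. card {i. i < n \<and> u i \<noteq> 0} = m \<longrightarrow> (\<forall>d. (\<Sum>i<n. x ^ i * d * u i) = 0) \<longrightarrow> (\<forall>i<n. u i = 0)"
proof (induction m rule: less_induct)
  case (less m)
  show ?case
  proof (rule allI, intro impI)
    fix u :: "nat \<Rightarrow> 'a"
    assume cm: "card {i. i < n \<and> u i \<noteq> 0} = m" and z: "\<forall>d. (\<Sum>i<n. x ^ i * d * u i) = 0"
    show "\<forall>i<n. u i = 0"
    proof (rule ccontr)
      assume "\<not> (\<forall>i<n. u i = 0)"
      then obtain i0 where i0: "i0 < n" "u i0 \<noteq> 0" by blast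
      define u' where "u' i = u i * inverse (u i0)" for i
      have u'i0: "u' i0 = 1" using i0 unfolding u'_def by simp
      have supp: "{i. i < n \<and> u' i \<noteq> 0} = {i. i < n \<and> u i \<noteq> 0}"
        unfolding u'_def using i0 by simp
      have z': "(\<Sum>i<n. x ^ i * d * u' i) = 0" for d
      proof -
        have "(\<Sum>i<n. x ^ i * d * u' i) = (\<Sum>i<n. x ^ i * d * u i) * inverse (u i0)"
          unfolding u'_def by (simp add: sum_distrib_right mult.assoc)
        then show ?thesis using z by simp
      qed
      have cent: "u' i \<in> center" if "i < n" for i
      proof -
        have "w * u' i = u' i * w" for w
        proof -
          define g where "g i = w * u' i - u' i * w" for i
          have zg: "\<forall>d. (\<Sum>i<n. x ^ i * d * g i) = 0"
          proof
            fix d :: 'a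
            have "(\<Sum>i<n. x ^ i * d * g i) = (\<Sum>i<n. x ^ i * (d * w) * u' i - x ^ i * d * u' i * w)"
              unfolding g_def by (intro sum.cong refl) (simp add: right_diff_distrib mult.assoc)
            also have "\<dots> = (\<Sum>i<n. x ^ i * (d * w) * u' i) - (\<Sum>i<n. x ^ i * d * u' i) * w"
              by (simp only: sum_subtractf sum_distrib_right)
            finally show "(\<Sum>i<n. x ^ i * d * g i) = 0" using z' by simp
          qed
          have sub: "{i. i < n \<and> g i \<noteq> 0} \<subseteq> {i. i < n \<and> u i \<noteq> 0} - {i0}"
          proof
            fix i assume "i \<in> {i. i < n \<and> g i \<noteq> 0}"
            then have a: "i < n" "g i \<noteq> 0" by auto
            have "i \<noteq> i0" using a(2) u'i0 unfolding g_def by auto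
            moreover have "u' i \<noteq> 0" using a(2) unfolding g_def by auto
            then have "u i \<noteq> 0" unfolding u'_def by auto
            ultimately show "i \<in> {i. i < n \<and> u i \<noteq> 0} - {i0}" using a(1) by simp
          qed
          have "card {i. i < n \<and> g i \<noteq> 0} < m"
          proof -
            have "card {i. i < n \<and> g i \<noteq> 0} \<le> card ({i. i < n \<and> u i \<noteq> 0} - {i0})"
              by (rule card_mono[OF _ sub]) simp
            also have "\<dots> < card {i. i < n \<and> u i \<noteq> 0}"
              by (rule card_Diff1_less) (use i0 in auto)
            finally show ?thesis using cm by simp
          qed
          then have "\<forall>i<n. g i = 0" using less zg by blast
          then show ?thesis using that unfolding g_def by simp
        qed
        then show ?thesis unfolding center_def by auto
      qed
      have "(\<Sum>i<n. u' i * x ^ i) = (\<Sum>i<n. x ^ i * 1 * u' i)"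
        using cent unfolding center_def by (intro sum.cong) auto
      then have "(\<Sum>i<n. u' i * x ^ i) = 0" using z'[of 1] by simp
      then have "\<forall>i<n. u' i = 0" using nolow cent by blast
      then show False using u'i0 i0 by simp
    qed
  qed
qed

lemma indep: "(\<And>d. (\<Sum>i<n. x ^ i * d * u i) = 0) \<Longrightarrow> i < n \<Longrightarrow> u i = 0"
  using indep_aux by blast


lemma Cx_mult: "\<forall>p\<in>(Cx x). \<forall>q\<in>(Cx x). p*q \<in> (Cx x)"
  unfolding Cx_def by (auto simp: mult.assoc) (metis mult.assoc)

lemma Cx_neg1: "-1 \<in> (Cx x)" unfolding Cx_def by simp

lemma Cx_inv: assumes "k \<in> (Cx x)" shows "inverse k \<in> (Cx x)"
proof (cases "k = 0")
  case True then show ?thesis unfolding Cx_def by simp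
next
  case False
  have kx: "k * x = x * k" using assms unfolding Cx_def by simp
  have "inverse k * x = inverse k * (x * k) * inverse k" using False by (simp add: mult.assoc)
  also have "\<dots> = inverse k * (k * x) * inverse k" using kx by simp
  also have "\<dots> = x * inverse k" using False by (simp add: mult.assoc[symmetric])
  finally show ?thesis unfolding Cx_def by simp
qed

lemma center_Cx: "z \<in> center \<Longrightarrow> z \<in> (Cx x)" unfolding center_def Cx_def by simp

lemma subring_Cx: "subring (Cx x)"
  unfolding subring_def Cx_def by (auto simp: algebra_simps) (metis mult.assoc)

lemma main_aux:
  "\<forall>v W. card {i. i < n \<and> v i \<noteq> 0} = m \<longrightarrow> finite W \<longrightarrow>
     (\<forall>d. (\<Sum>i<n. x ^ i * d * v i) \<in> lspan (Cx x) W) \<longrightarrow> (\<exists>d. (\<Sum>i<n. x ^ i * d * v i) \<noteq> 0) \<longrightarrow>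
     (\<exists>W'. finite W' \<and> (\<forall>y. y \<in> lspan (Cx x) W'))"
proof (induction m rule: less_induct)
  case (less m)
  show ?case
  proof (intro allI impI)
    fix v :: "nat \<Rightarrow> 'a" and W
    assume cm: "card {i. i < n \<and> v i \<noteq> 0} = m" and fW: "finite W"
      and inW: "\<forall>d. (\<Sum>i<n. x ^ i * d * v i) \<in> lspan (Cx x) W"
      and nz: "\<exists>d. (\<Sum>i<n. x ^ i * d * v i) \<noteq> 0"
    obtain d0 where d0: "(\<Sum>i<n. x ^ i * d0 * v i) \<noteq> 0" using nz by blast
    obtain i0 where i0: "i0 < n" "v i0 \<noteq> 0"
    proof -
      have "\<not> (\<forall>i<n. v i = 0)"
      proof
        assume "\<forall>i<n. v i = 0"
        then have "(\<Sum>i<n. x ^ i * d0 * v i) = 0" by simp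
        then show False using d0 by simp
      qed
      then show ?thesis using that by blast
    qed
    define v' where "v' i = v i * inverse (v i0)" for i
    define W1 where "W1 = (\<lambda>w. w * inverse (v i0)) ` W"
    have fW1: "finite W1" unfolding W1_def using fW by simp
    have v'i0: "v' i0 = 1" using i0 unfolding v'_def by simp
    have supp: "{i. i < n \<and> v' i \<noteq> 0} = {i. i < n \<and> v i \<noteq> 0}"
      unfolding v'_def using i0 by simp
    have opv': "(\<Sum>i<n. x ^ i * d * v' i) = (\<Sum>i<n. x ^ i * d * v i) * inverse (v i0)" for d
      unfolding v'_def by (simp add: sum_distrib_right mult.assoc)
    have inW1: "(\<Sum>i<n. x ^ i * d * v' i) \<in> lspan (Cx x) W1" for d
      unfolding opv' W1_def using inW lspan_rmult by blast
    have nz': "(\<Sum>i<n. x ^ i * d0 * v' i) \<noteq> 0" unfolding opv' using d0 i0 by simp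
    show "\<exists>W'. finite W' \<and> (\<forall>y. y \<in> lspan (Cx x) W')"
    proof (cases "\<exists>w d. (\<Sum>i<n. x ^ i * d * (w * v' i - v' i * w)) \<noteq> 0")
      case True
      then obtain w d1 where wd: "(\<Sum>i<n. x ^ i * d1 * (w * v' i - v' i * w)) \<noteq> 0" by blast
      define g where "g i = w * v' i - v' i * w" for i
      define W2 where "W2 = W1 \<union> (\<lambda>y. y * w) ` W1"
      have opg: "(\<Sum>i<n. x ^ i * d * g i) = (\<Sum>i<n. x ^ i * (d * w) * v' i) - (\<Sum>i<n. x ^ i * d * v' i) * w" for d
      proof -
        have "(\<Sum>i<n. x ^ i * d * g i) = (\<Sum>i<n. x ^ i * (d * w) * v' i - x ^ i * d * v' i * w)"
          unfolding g_def by (intro sum.cong refl) (simp add: right_diff_distrib mult.assoc)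
        also have "\<dots> = (\<Sum>i<n. x ^ i * (d * w) * v' i) - (\<Sum>i<n. x ^ i * d * v' i) * w"
          by (simp only: sum_subtractf sum_distrib_right)
        finally show ?thesis .
      qed
      have inW2: "\<forall>d. (\<Sum>i<n. x ^ i * d * g i) \<in> lspan (Cx x) W2"
      proof
        fix d :: 'a
        have a: "(\<Sum>i<n. x ^ i * (d * w) * v' i) \<in> lspan (Cx x) W2"
          using inW1 lspan_mono unfolding W2_def by blast
        have b: "(\<Sum>i<n. x ^ i * d * v' i) * w \<in> lspan (Cx x) W2"
          using lspan_rmult[OF inW1[of d], of w] lspan_mono unfolding W2_def by blast
        show "(\<Sum>i<n. x ^ i * d * g i) \<in> lspan (Cx x) W2"
          unfolding opg using lspan_sub[OF a b Cx_neg1 Cx_mult] .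
      qed
      have fW2: "finite W2" unfolding W2_def using fW1 by simp
      have sub: "{i. i < n \<and> g i \<noteq> 0} \<subseteq> {i. i < n \<and> v i \<noteq> 0} - {i0}"
      proof
        fix i assume "i \<in> {i. i < n \<and> g i \<noteq> 0}"
        then have a: "i < n" "g i \<noteq> 0" by auto
        have "i \<noteq> i0" using a(2) v'i0 unfolding g_def by auto
        moreover have "v' i \<noteq> 0" using a(2) unfolding g_def by auto
        then have "v i \<noteq> 0" unfolding v'_def by auto
        ultimately show "i \<in> {i. i < n \<and> v i \<noteq> 0} - {i0}" using a(1) by simp
      qed
      have lt: "card {i. i < n \<and> g i \<noteq> 0} < m"
      proof -
        have "card {i. i < n \<and> g i \<noteq> 0} \<le> card ({i. i < n \<and> v i \<noteq> 0} - {i0})"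
          by (rule card_mono[OF _ sub]) simp
        also have "\<dots> < card {i. i < n \<and> v i \<noteq> 0}"
          by (rule card_Diff1_less) (use i0 in auto)
        finally show ?thesis using cm by simp
      qed
      have "\<exists>d. (\<Sum>i<n. x ^ i * d * g i) \<noteq> 0" using wd unfolding g_def by blast
      then show ?thesis using less[OF lt] fW2 inW2 by blast
    next
      case False
      have cent: "v' i \<in> center" if "i < n" for i
      proof -
        have "w * v' i = v' i * w" for w
          using indep[of "\<lambda>i. w * v' i - v' i * w" i] False that by simp
        then show ?thesis unfolding center_def by auto
      qed
      define k where "k = (\<Sum>i<n. v' i * x ^ i)"
      have opk: "(\<Sum>i<n. x ^ i * d * v' i) = k * d" for d
      proof -
        have "(\<Sum>i<n. x ^ i * d * v' i) = (\<Sum>i<n. v' i * x ^ i * d)"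
        proof (intro sum.cong refl)
          fix i assume "i \<in> {..<n}"
          then have "v' i \<in> center" using cent by simp
          then have "x ^ i * d * v' i = v' i * (x ^ i * d)" unfolding center_def by simp
          then show "x ^ i * d * v' i = v' i * x ^ i * d" by (simp add: mult.assoc)
        qed
        then show ?thesis unfolding k_def by (simp add: sum_distrib_right)
      qed
      have kCx: "k \<in> (Cx x)"
      proof -
        have "v' i * x ^ i \<in> (Cx x)" if "i \<in> {..<n}" for i
        proof -
          have "v' i \<in> center" using cent that by simp
          then show ?thesis unfolding Cx_def center_def by (simp add: mult.assoc) (metis mult.assoc power_commutes)
        qed
        then have "(v' i * x ^ i) * x = x * (v' i * x ^ i)" if "i \<in> {..<n}" for i
          using that unfolding Cx_def by simp
        then have "k * x = x * k" unfolding k_def sum_distrib_left sum_distrib_right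
          by (intro sum.cong) auto
        then show ?thesis unfolding Cx_def by simp
      qed
      have k0: "k \<noteq> 0" using nz' opk[of d0] by auto
      have "\<forall>y. y \<in> lspan (Cx x) W1"
      proof
        fix y :: 'a
        have "y = inverse k * (\<Sum>i<n. x ^ i * y * v' i)" unfolding opk using k0
          by (simp add: mult.assoc[symmetric])
        moreover have "inverse k * (\<Sum>i<n. x ^ i * y * v' i) \<in> lspan (Cx x) W1"
          using lspan_lmult[OF inW1 Cx_inv[OF kCx] Cx_mult] .
        ultimately show "y \<in> lspan (Cx x) W1" by simp
      qed
      then show ?thesis using fW1 by blast
    qed
  qed
qed

definition Sk :: "nat \<Rightarrow> 'a \<Rightarrow> 'a" where "Sk k d = (\<Sum>i<k. x ^ i * d * x ^ (k - 1 - i))"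

lemma Sk_comm: "x * Sk k d - Sk k d * x = x ^ k * d - d * x ^ k"
proof (induction k)
  case 0 then show ?case unfolding Sk_def by simp
next
  case (Suc k)
  have "Sk (Suc k) d = (\<Sum>i<k. x ^ i * d * x ^ (k - i)) + x ^ k * d"
    unfolding Sk_def by simp
  also have "(\<Sum>i<k. x ^ i * d * x ^ (k - i)) = Sk k d * x"
    unfolding Sk_def sum_distrib_right
  proof (intro sum.cong refl)
    fix i assume "i \<in> {..<k}"
    then have "k - i = Suc (k - 1 - i)" by auto
    then show "x ^ i * d * x ^ (k - i) = x ^ i * d * x ^ (k - 1 - i) * x"
      by (simp add: power_Suc2 mult.assoc) (metis power_commutes)
  qed
  finally have e: "Sk (Suc k) d = Sk k d * x + x ^ k * d" .
  have "x * Sk (Suc k) d - Sk (Suc k) d * x = (x * Sk k d - Sk k d * x) * x + x * x ^ k * d - x ^ k * d * x"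
    unfolding e by (simp add: algebra_simps)
  also have "\<dots> = x ^ Suc k * d - d * x ^ Suc k"
    unfolding Suc by (simp add: algebra_simps power_Suc2[symmetric] del: power_Suc) (metis mult.assoc power_Suc)
  finally show ?case .
qed

lemma spans: "\<exists>W. finite W \<and> (\<forall>y. y \<in> lspan (Cx x) W)"
proof -
  define vp where "vp i = (\<Sum>k\<le>n. c k * (if i < k then x ^ (k - 1 - i) else 0))" for i
  have opS: "(\<Sum>i<n. x ^ i * d * vp i) = (\<Sum>k\<le>n. c k * Sk k d)" for d
  proof -
    have "(\<Sum>i<n. x ^ i * d * vp i) = (\<Sum>i<n. \<Sum>k\<le>n. c k * (if i < k then x ^ i * d * x ^ (k - 1 - i) else 0))"
      unfolding vp_def sum_distrib_left
    proof (intro sum.cong refl)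
      fix i k assume "k \<in> {..n}"
      then have ck: "c k \<in> center" using cc by simp
      show "x ^ i * d * (c k * (if i < k then x ^ (k - 1 - i) else 0)) =
            c k * (if i < k then x ^ i * d * x ^ (k - 1 - i) else 0)"
      proof (cases "i < k")
        case True
        have "x ^ i * d * (c k * x ^ (k - 1 - i)) = (x ^ i * d * c k) * x ^ (k - 1 - i)" by (simp add: mult.assoc)
        also have "x ^ i * d * c k = c k * (x ^ i * d)" using ck unfolding center_def by simp
        finally show ?thesis using True by (simp add: mult.assoc)
      qed simp
    qed
    also have "\<dots> = (\<Sum>k\<le>n. \<Sum>i<n. c k * (if i < k then x ^ i * d * x ^ (k - 1 - i) else 0))"
      by (rule sum.swap)
    also have "\<dots> = (\<Sum>k\<le>n. c k * Sk k d)"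
    proof (intro sum.cong refl)
      fix k assume "k \<in> {..n}"
      then have "k \<le> n" by simp
      have "(\<Sum>i<n. c k * (if i < k then x ^ i * d * x ^ (k - 1 - i) else 0))
          = c k * (\<Sum>i<n. if i < k then x ^ i * d * x ^ (k - 1 - i) else 0)"
        by (simp add: sum_distrib_left)
      also have "\<dots> = c k * Sk k d"
        using sum_if_less[OF \<open>k \<le> n\<close>, of "\<lambda>i. x ^ i * d * x ^ (k - 1 - i)"] unfolding Sk_def by simp
      finally show "(\<Sum>i<n. c k * (if i < k then x ^ i * d * x ^ (k - 1 - i) else 0)) = c k * Sk k d" .
    qed
    finally show ?thesis .
  qed
  have inCx: "(\<Sum>i<n. x ^ i * d * vp i) \<in> (Cx x)" for d
  proof -
    have t1: "x * (c k * Sk k d) - c k * Sk k d * x = c k * (x * Sk k d - Sk k d * x)" if "k \<in> {..n}" for k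
    proof -
      have ck: "c k * x = x * c k" using cc that unfolding center_def by simp
      have "x * (c k * Sk k d) = c k * (x * Sk k d)"
        by (simp only: mult.assoc[symmetric] ck)
      then show ?thesis by (simp add: right_diff_distrib mult.assoc)
    qed
    have t2: "c k * (x ^ k * d - d * x ^ k) = c k * x ^ k * d - d * (c k * x ^ k)" if "k \<in> {..n}" for k
    proof -
      have ck: "c k * d = d * c k" using cc that unfolding center_def by simp
      have "d * (c k * x ^ k) = c k * d * x ^ k"
        by (simp only: mult.assoc[symmetric] ck)
      then show ?thesis by (simp add: right_diff_distrib mult.assoc)
    qed
    have "x * (\<Sum>k\<le>n. c k * Sk k d) - (\<Sum>k\<le>n. c k * Sk k d) * x
        = (\<Sum>k\<le>n. x * (c k * Sk k d) - c k * Sk k d * x)"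
      by (simp only: sum_distrib_left sum_distrib_right sum_subtractf)
    also have "\<dots> = (\<Sum>k\<le>n. c k * (x ^ k * d - d * x ^ k))"
      using t1 Sk_comm by (intro sum.cong refl) simp
    also have "\<dots> = (\<Sum>k\<le>n. c k * x ^ k * d - d * (c k * x ^ k))"
      using t2 by (intro sum.cong refl) simp
    also have "\<dots> = (\<Sum>k\<le>n. c k * x ^ k) * d - d * (\<Sum>k\<le>n. c k * x ^ k)"
      by (simp only: sum_distrib_left sum_distrib_right sum_subtractf)
    also have "\<dots> = 0" using px by simp
    finally show ?thesis unfolding opS Cx_def by simp
  qed
  have inW: "\<forall>d. (\<Sum>i<n. x ^ i * d * vp i) \<in> lspan (Cx x) {1}"
  proof
    fix d
    have "(\<Sum>i<n. x ^ i * d * vp i) * 1 + 0 \<in> lspan (Cx x) {1}"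
      by (rule lspan.ls[OF inCx _ lspan.lz]) simp
    then show "(\<Sum>i<n. x ^ i * d * vp i) \<in> lspan (Cx x) {1}" by simp
  qed
  have nz: "\<exists>d. (\<Sum>i<n. x ^ i * d * vp i) \<noteq> 0"
  proof (rule ccontr)
    assume "\<not> (\<exists>d. (\<Sum>i<n. x ^ i * d * vp i) \<noteq> 0)"
    then have "\<And>d. (\<Sum>i<n. x ^ i * d * vp i) = 0" by blast
    moreover have "n - 1 < n" using n_pos by simp
    ultimately have "vp (n - 1) = 0" by (rule indep)
    moreover have "vp (n - 1) = c n"
    proof -
      have "vp (n - 1) = (\<Sum>k\<le>n. if k = n then c n else 0)"
        unfolding vp_def using n_pos by (intro sum.cong refl) auto
      then show ?thesis by simp
    qed
    ultimately show False using cn by simp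
  qed
  show ?thesis using main_aux[rule_format, OF refl _ inW[rule_format] nz] by blast
qed

end

theorem corollary2p11:
  assumes "\<forall>x::'a::division_ring. algebraic_over_center x"
  shows "(\<not> (\<exists>S::'a set. maximal_subring S)) \<longleftrightarrow>
         ((center::'a set) = UNIV \<and> \<not> (\<exists>S::'a set. maximal_subring S))"
proof
  assume nm: "\<not> (\<exists>S::'a set. maximal_subring S)"
  have "(center::'a set) = UNIV"
  proof (rule ccontr)
    assume "(center::'a set) \<noteq> UNIV"
    then obtain x :: 'a where xn: "x \<notin> center" by blast
    define P where "P m \<longleftrightarrow> (\<exists>c. (\<forall>i\<le>m. c i \<in> center) \<and> c m \<noteq> 0 \<and> (\<Sum>i\<le>m. c i * x ^ i) = 0)" for m
    have "\<exists>m. P m" using assms unfolding algebraic_over_center_def P_def by blast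
    then obtain m where "P m" by blast
    define n where "n = (LEAST m. P m)"
    have Pn: "P n" unfolding n_def by (rule LeastI) fact
    then obtain c where cc: "\<forall>i\<le>n. c i \<in> center" and cn: "c n \<noteq> 0" and px: "(\<Sum>i\<le>n. c i * x ^ i) = 0"
      unfolding P_def by blast
    have minimal: "\<forall>m<n. \<forall>c'. (\<forall>i\<le>m. c' i \<in> center) \<longrightarrow> c' m \<noteq> 0 \<longrightarrow> (\<Sum>i\<le>m. c' i * x ^ i) \<noteq> 0"
    proof (intro allI impI)
      fix m and c' :: "nat \<Rightarrow> 'a" assume "m < n" "\<forall>i\<le>m. c' i \<in> center" "c' m \<noteq> 0"
      have "\<not> P m" using not_less_Least[of m P] \<open>m < n\<close> unfolding n_def by blast
      then show "(\<Sum>i\<le>m. c' i * x ^ i) \<noteq> 0" using \<open>\<forall>i\<le>m. c' i \<in> center\<close> \<open>c' m \<noteq> 0\<close>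
        unfolding P_def by blast
    qed
    obtain W where W: "finite W" "\<forall>y. y \<in> lspan (Cx x) W"
      using spans[OF cc cn px minimal] by blast
    obtain y where "x * y \<noteq> y * x" using xn unfolding center_def by blast
    then have "y \<notin> Cx x" by (auto simp: Cx_def)
    then have "Cx x \<noteq> UNIV" by blast
    then have "\<exists>S::'a set. maximal_subring S" using zorn_part[OF subring_Cx[OF cc cn px minimal] _ W] by blast
    then show False using nm by blast
  qed
  then show "(center::'a set) = UNIV \<and> \<not> (\<exists>S::'a set. maximal_subring S)" using nm by blast
next
  assume "(center::'a set) = UNIV \<and> \<not> (\<exists>S::'a set. maximal_subring S)"
  then show "\<not> (\<exists>S::'a set. maximal_subring S)" by blast
qed

end
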